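(* Let $\Phi(t)$ be a solution of $m'=[\omega,m]+DL(\Phi,\omega)$, $\Phi'=\omega\Phi$, with (constant) first integrals $h,l,n$, and let $u=\langle r,k\rangle$. Then the cubic polynomial $$P(u)=\frac1p(1-u^2)\left(h-\frac{n^2}{2C}-pu\right)-\frac{1}{2Ap}(l-nu)^2$$ has three real roots $e_1\le e_2\le e_3$ satisfying $-1\le e_1\le e_2\le 1\le e_3$, and $u$ satisfies $$-\frac s2\left(u^2-e_4^2\right)u'^2=(u-e_1)(u-e_2)(u-e_3),\qquad e_4=\sqrt{1+\frac{A}{ps}}.$$
   Context: $\mathrm{SU}(2)$ is the group of complex $2\times2$ matrices $\begin{pmatrix}\alpha&\beta\\ \gamma&\delta\end{pmatrix}$ with $\alpha\delta-\beta\gamma=1$, $\delta=\bar\alpha$, $\gamma=-\bar\beta$; $\mathrm{su}(2)$ is identified with $\mathbb{R}^3$ via $(x_1,x_2,x_3)\mapsto\frac12\begin{pmatrix}ix_3&-x_2+ix_1\\ x_2+ix_1&-ix_3\end{pmatrix}$, with $[x,y]=xy-yx$ and $\langle x,y\rangle=-2\,\mathrm{Tr}(xy)$; $k=\frac12\mathrm{diag}(i,-i)$. Toy top parameters: $A,C>0$ moments of inertia (perpendicular axis through center of mass, symmetry axis), $s>0$ tip-to-center-of-mass distance, $p>0$ equal to $s$ times the mass, gravity normalized to $1$. For a curve $\Phi(t)$ in $\mathrm{SU}(2)$: $\omega=\Phi'\Phi^{-1}$, $r=\Phi k\Phi^{-1}$, $T=\frac12A\langle\omega,\omega\rangle+\frac12(C-A)\langle\omega,r\rangle^2+\frac12ps\langle[r,k],\omega\rangle^2$,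 $V=p\langle r,k\rangle$, $m=A\omega+(C-A)\langle\omega,r\rangle r+ps\langle[r,k],\omega\rangle[r,k]$, $DL(\Phi,\omega)=(C-A)\langle\omega,r\rangle[r,\omega]+ps\langle[r,k],\omega\rangle[r,[k,\omega]]+p[r,k]$. The first integrals are $h=T+V$, $l=\langle m,k\rangle$, $n=\langle m,r\rangle$. *)

theory Defs
  imports "HOL-Analysis.Analysis"
begin

type_synonym cmat = "complex^2^2"

definition SU2 :: "cmat set" where
  "SU2 = {M. M$1$1 * M$2$2 - M$1$2 * M$2$1 = 1 \<and> M$2$2 = cnj (M$1$1) \<and> M$2$1 = - cnj (M$1$2)}"

definition inv2 :: "cmat \<Rightarrow> cmat" where
  "inv2 M = (let d = M$1$1 * M$2$2 - M$1$2 * M$2$1 in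
     (\<chi> i j. if i = 1 \<and> j = 1 then M$2$2 / d
             else if i = 1 \<and> j = 2 then - M$1$2 / d
             else if i = 2 \<and> j = 1 then - M$2$1 / d
             else M$1$1 / d))"

definition kk :: cmat where
  "kk = (\<chi> i j. if i = j then (if i = 1 then \<i> / 2 else - \<i> / 2) else 0)"

definition brk :: "cmat \<Rightarrow> cmat \<Rightarrow> cmat" where
  "brk x y = x ** y - y ** x"

definition ip :: "cmat \<Rightarrow> cmat \<Rightarrow> real" where
  "ip x y = -2 * Re (trace (x ** y))"

definition rr :: "cmat \<Rightarrow> cmat" where
  "rr \<Phi> = \<Phi> ** kk ** inv2 \<Phi>"

definition kinetic :: "real \<Rightarrow> real \<Rightarrow> real \<Rightarrow> real \<Rightarrow> cmat \<Rightarrow> cmat \<Rightarrow> real" where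
  "kinetic A C p s \<Phi> \<omega> =
     1/2 * A * ip \<omega> \<omega> + 1/2 * (C - A) * (ip \<omega> (rr \<Phi>))^2
     + 1/2 * p * s * (ip (brk (rr \<Phi>) kk) \<omega>)^2"

definition potential :: "real \<Rightarrow> cmat \<Rightarrow> real" where
  "potential p \<Phi> = p * ip (rr \<Phi>) kk"

definition mom :: "real \<Rightarrow> real \<Rightarrow> real \<Rightarrow> real \<Rightarrow> cmat \<Rightarrow> cmat \<Rightarrow> cmat" where
  "mom A C p s \<Phi> \<omega> =
     A *\<^sub>R \<omega> + ((C - A) * ip \<omega> (rr \<Phi>)) *\<^sub>R rr \<Phi>
     + (p * s * ip (brk (rr \<Phi>) kk) \<omega>) *\<^sub>R brk (rr \<Phi>) kk"

definition DL :: "real \<Rightarrow> real \<Rightarrow> real \<Rightarrow> real \<Rightarrow> cmat \<Rightarrow> cmat \<Rightarrow> cmat" where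
  "DL A C p s \<Phi> \<omega> =
     ((C - A) * ip \<omega> (rr \<Phi>)) *\<^sub>R brk (rr \<Phi>) \<omega>
     + (p * s * ip (brk (rr \<Phi>) kk) \<omega>) *\<^sub>R brk (rr \<Phi>) (brk kk \<omega>)
     + p *\<^sub>R brk (rr \<Phi>) kk"

definition Pcub :: "real \<Rightarrow> real \<Rightarrow> real \<Rightarrow> real \<Rightarrow> real \<Rightarrow> real \<Rightarrow> real \<Rightarrow> real" where
  "Pcub A C p h l n u =
     (1/p) * (1 - u^2) * (h - n^2 / (2*C) - p*u) - 1 / (2*A*p) * (l - n*u)^2"

end

theory Submission
  imports Defs
begin


definition E :: "real \<Rightarrow> real \<Rightarrow> real \<Rightarrow> cmat" where
  "E x1 x2 x3 = (\<chi> i j. if i = 1 \<and> j = 1 then Complex 0 (x3/2)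
     else if i = 1 \<and> j = 2 then Complex (-x2/2) (x1/2)
     else if i = 2 \<and> j = 1 then Complex (x2/2) (x1/2)
     else Complex 0 (-x3/2))"

lemma E_nth: "E x1 x2 x3 $ 1 $ 1 = Complex 0 (x3/2)" "E x1 x2 x3 $ 1 $ 2 = Complex (-x2/2) (x1/2)"
  "E x1 x2 x3 $ 2 $ 1 = Complex (x2/2) (x1/2)" "E x1 x2 x3 $ 2 $ 2 = Complex 0 (-x3/2)"
  by (simp_all add: E_def)

lemma ip_E: "ip (E x1 x2 x3) (E y1 y2 y3) = x1*y1 + x2*y2 + x3*y3"
  by (simp add: ip_def trace_def matrix_matrix_mult_def sum_2 E_nth algebra_simps)

lemma brk_E: "brk (E x1 x2 x3) (E y1 y2 y3) = E (x2*y3 - x3*y2) (x3*y1 - x1*y3) (x1*y2 - x2*y1)"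
  by (simp add: brk_def vec_eq_iff forall_2 matrix_matrix_mult_def sum_2 E_nth complex_eq_iff algebra_simps, simp add: field_simps)

lemma kk_E: "kk = E 0 0 1"
  by (simp add: kk_def vec_eq_iff forall_2 E_nth complex_eq_iff)

lemma scale_E: "c *\<^sub>R E x1 x2 x3 = E (c*x1) (c*x2) (c*x3)"
  by (simp add: vec_eq_iff forall_2 E_nth complex_eq_iff)

lemma add_E: "E x1 x2 x3 + E y1 y2 y3 = E (x1+y1) (x2+y2) (x3+y3)"
  by (simp add: vec_eq_iff forall_2 E_nth complex_eq_iff)




lemma alg:
  fixes A C p s w1 w2 w3 r1 r2 r3 :: real
  assumes pos: "A > 0" "C > 0" "p > 0" "s > 0"
    and r: "r1^2 + r2^2 + r3^2 = 1"
    and x: "x = w1*r1 + w2*r2 + w3*r3"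
    and sg: "sig = w1*r2 - w2*r1"
    and h: "h = 1/2*A*(w1^2+w2^2+w3^2) + 1/2*(C-A)*x^2 + 1/2*p * s * sig^2 + p*r3"
    and l: "l = A*w3 + (C-A)*x*r3"
    and n: "n = C*x"
  shows "2*p*Pcub A C p h l n r3 = (A + p * s * (1-r3^2))* sig^2"
proof -
  have lag: "(w1^2+w2^2+w3^2)*(1-r3^2) - sig^2 = x^2 + w3^2 - 2*r3*x*w3"
  proof -
    have "(w1^2+w2^2+w3^2)*((r1^2+r2^2+r3^2)-r3^2) - sig^2 = x^2 + w3^2*(r1^2+r2^2+r3^2) - 2*r3*x*w3"
      unfolding x sg by algebra
    then show ?thesis using r by simp
  qed
  have xx: "x = n / C" using n pos by simp
  have w3: "w3 = (l - (C-A)*x*r3)/A" using l pos by simp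
  show ?thesis unfolding Pcub_def h
    using lag pos unfolding xx w3 by (simp add: field_simps power2_eq_square) algebra
qed



lemma quad_roots:
  fixes \<beta> \<gamma> y :: real
  assumes "y^2 + \<beta>*y + \<gamma> \<le> 0"
  shows "\<exists>q1 q2. q1 \<le> y \<and> y \<le> q2 \<and> (\<forall>t. t^2 + \<beta>*t + \<gamma> = (t-q1)*(t-q2))"
proof -
  define D where "D = \<beta>^2 - 4*\<gamma>"
  have yy: "(2*y + \<beta>)^2 \<le> D" using assms unfolding D_def by (simp add: power2_eq_square algebra_simps)
  hence D0: "D \<ge> 0" by (smt (verit) zero_le_power2)
  have sq: "sqrt D ^2 = D" using D0 by simp
  have "\<bar>2*y + \<beta>\<bar> \<le> sqrt D" by (metis real_sqrt_abs real_sqrt_le_mono yy)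
  hence b: "(-\<beta> - sqrt D)/2 \<le> y \<and> y \<le> (-\<beta> + sqrt D)/2" by (auto simp: abs_le_iff field_simps)
  have "\<forall>t. t^2 + \<beta>*t + \<gamma> = (t-(-\<beta> - sqrt D)/2)*(t-(-\<beta> + sqrt D)/2)"
  proof
    fix t
    have "(t-(-\<beta> - sqrt D)/2)*(t-(-\<beta> + sqrt D)/2) = t^2 + \<beta>*t + (\<beta>^2 - sqrt D^2)/4"
      by (simp add: field_simps power2_eq_square)
    also have "\<dots> = t^2 + \<beta>*t + \<gamma>" by (simp only: sq) (simp add: D_def)
    finally show "t^2 + \<beta>*t + \<gamma> = (t-(-\<beta> - sqrt D)/2)*(t-(-\<beta> + sqrt D)/2)" by simp
  qed
  with b show ?thesis by blast
qed

lemma big_root: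
  fixes a b c :: real
  assumes "1 + a + b + c \<le> 0"
  shows "\<exists>e\<ge>1. e^3 + a*e^2 + b*e + c = 0"
proof -
  define M where "M = 2 + \<bar>a\<bar> + \<bar>b\<bar> + \<bar>c\<bar>"
  have M1: "M \<ge> 1" unfolding M_def by simp
  have "M^3 + a*M^2 + b*M + c \<ge> M^2*(M - \<bar>a\<bar> - \<bar>b\<bar> - \<bar>c\<bar>)"
  proof -
    have "a*M^2 \<ge> -\<bar>a\<bar>*M^2" by (smt (verit) abs_ge_minus_self mult_right_mono zero_le_power2)
    moreover have "b*M \<ge> -\<bar>b\<bar>*M^2"
    proof -
      have "M \<le> M^2" using M1 by (simp add: power2_eq_square)
      hence "\<bar>b\<bar>*M \<le> \<bar>b\<bar>*M^2" by (simp add: mult_left_mono)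
      moreover have "b*M \<ge> -\<bar>b\<bar>*M" using M1 by (smt (verit) abs_ge_minus_self mult_right_mono)
      ultimately show ?thesis by linarith
    qed
    moreover have "c \<ge> -\<bar>c\<bar>*M^2"
    proof -
      have "1 \<le> M^2" using M1 by (simp add: one_le_power)
      hence "\<bar>c\<bar> \<le> \<bar>c\<bar>*M^2" by (simp add: mult_le_cancel_left1)
      thus ?thesis by linarith
    qed
    ultimately show ?thesis by (simp add: power3_eq_cube power2_eq_square algebra_simps)
  qed
  moreover have "M^2*(M - \<bar>a\<bar> - \<bar>b\<bar> - \<bar>c\<bar>) \<ge> 0" unfolding M_def by simp
  ultimately have pm: "M^3 + a*M^2 + b*M + c \<ge> 0" by linarith
  have "\<exists>x\<ge>1. x \<le> M \<and> (\<lambda>x. x^3 + a*x^2 + b*x + c) x = 0"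
    by (rule IVT') (use assms pm M1 in \<open>auto intro!: continuous_intros\<close>)
  thus ?thesis by auto
qed

lemma cubic:
  fixes a b c x :: real
  assumes m1: "-1 + a - b + c \<le> 0" and p1: "1 + a + b + c \<le> 0"
    and x: "-1 \<le> x" "x \<le> 1" and px: "x^3 + a*x^2 + b*x + c \<ge> 0"
    and d1: "x = 1 \<Longrightarrow> 3 + 2*a + b \<le> 0"
    and d2: "x = -1 \<Longrightarrow> 3 - 2*a + b \<ge> 0"
  shows "\<exists>e1 e2 e3. -1 \<le> e1 \<and> e1 \<le> e2 \<and> e2 \<le> 1 \<and> 1 \<le> e3
          \<and> (\<forall>t. t^3 + a*t^2 + b*t + c = (t - e1) * (t - e2) * (t - e3))"
proof -
  obtain e where e1: "e \<ge> 1" and pe: "e^3 + a*e^2 + b*e + c = 0" using big_root[OF p1] by blast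
  define \<beta> where "\<beta> = a + e"
  define \<gamma> where "\<gamma> = b + e*\<beta>"
  have fac: "\<And>t. t^3 + a*t^2 + b*t + c = (t - e) * (t^2 + \<beta>*t + \<gamma>)"
  proof -
    fix t
    have "c = - e*\<gamma>" using pe unfolding \<gamma>_def \<beta>_def by (simp add: power2_eq_square power3_eq_cube algebra_simps)
    thus "t^3 + a*t^2 + b*t + c = (t - e) * (t^2 + \<beta>*t + \<gamma>)"
      unfolding \<beta>_def \<gamma>_def by (simp add: power2_eq_square power3_eq_cube algebra_simps)
  qed
  have Qm1: "1 - \<beta> + \<gamma> \<ge> 0"
  proof -
    have "(-1 - e) * (1 - \<beta> + \<gamma>) \<le> 0" using m1 fac[of "-1"] by simp
    thus ?thesis using e1 by (smt (verit) mult_neg_neg)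
  qed
  have D1: "3 + 2*a + b = (1 + \<beta> + \<gamma>) + (1 - e)*(2 + \<beta>)" unfolding \<beta>_def \<gamma>_def by (simp add: algebra_simps)
  have D2: "3 - 2*a + b = (1 - \<beta> + \<gamma>) + (-1 - e)*(-2 + \<beta>)" unfolding \<beta>_def \<gamma>_def by (simp add: algebra_simps)
  obtain y where y: "-1 \<le> y" "y \<le> 1" "y^2 + \<beta>*y + \<gamma> \<le> 0"
    and ym1: "y = -1 \<Longrightarrow> \<beta> \<le> 2" and y1: "y = 1 \<Longrightarrow> x < e \<Longrightarrow> x = 1"
  proof (cases "x < e")
    case True
    have "(x - e) * (x^2 + \<beta>*x + \<gamma>) \<ge> 0" using px fac[of x] by simp
    hence Qx: "x^2 + \<beta>*x + \<gamma> \<le> 0" using True by (smt (verit) mult_neg_pos)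
    show ?thesis
    proof (rule that[of x])
      assume xm: "x = -1"
      have "1 - \<beta> + \<gamma> = 0" using Qx Qm1 xm by simp
      hence "(-1 - e)*(-2 + \<beta>) \<ge> 0" using d2[OF xm] D2 by simp
      thus "\<beta> \<le> 2" using e1 by (smt (verit) mult_neg_pos)
    qed (use x Qx in auto)
  next
    case False
    hence "x = 1" "e = 1" using x e1 by auto
    hence "1 + \<beta> + \<gamma> \<le> 0" using d1 D1 by simp
    thus ?thesis by (intro that[of 1]) (use False in auto)
  qed
  obtain q1 q2 where q: "q1 \<le> y" "y \<le> q2" and qf: "\<And>t. t^2 + \<beta>*t + \<gamma> = (t-q1)*(t-q2)"
    using quad_roots[OF y(3)] by blast
  have bq: "\<beta> = -(q1+q2)" using qf[of 0] qf[of 1] by (simp add: algebra_simps)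
  have q1m: "q1 \<ge> -1"
  proof (rule ccontr)
    assume "\<not> q1 \<ge> -1"
    hence "-1 - q1 > 0" by simp
    moreover have "(-1 - q1) * (-1 - q2) \<ge> 0" using Qm1 qf[of "-1"] by simp
    ultimately have "-1 - q2 \<ge> 0" by (smt (verit) mult_pos_neg)
    hence "y = -1" using q y by simp
    hence "\<beta> \<le> 2" by (rule ym1)
    thus False using bq \<open>-1 - q1 > 0\<close> \<open>-1 - q2 \<ge> 0\<close> by simp
  qed
  have fac2: "\<And>t. t^3 + a*t^2 + b*t + c = (t - q1) * (t - q2) * (t - e)"
    unfolding fac qf by (simp add: mult_ac)
  have mn: "q2 \<le> 1 \<or> e \<le> 1"
  proof (rule ccontr)
    assume "\<not> (q2 \<le> 1 \<or> e \<le> 1)"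
    hence h2: "q2 > 1" "e > 1" by auto
    have "(1 - q1) * ((1 - q2) * (1 - e)) \<le> 0" using p1 fac2[of 1] by (simp add: algebra_simps)
    moreover have "(1 - q2) * (1 - e) > 0" using h2 by (simp add: mult_neg_neg)
    ultimately have "1 - q1 \<le> 0" by (smt (verit) mult_pos_pos)
    hence "q1 = 1" "y = 1" using q y by auto
    have "x < e" using h2 x by simp
    hence "x = 1" using y1 \<open>y = 1\<close> by simp
    have "1 + \<beta> + \<gamma> = 0" using qf[of 1] \<open>q1 = 1\<close> by simp
    moreover have "(1 - e)*(2 + \<beta>) > 0" using bq \<open>q1 = 1\<close> h2 by (simp add: mult_neg_neg)
    ultimately have "3 + 2*a + b > 0" using D1 by simp
    thus False using d1 \<open>x = 1\<close> by simp
  qed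
  show ?thesis
  proof (cases "q2 \<le> e")
    case True
    hence "-1 \<le> q1 \<and> q1 \<le> q2 \<and> q2 \<le> 1 \<and> 1 \<le> e \<and> (\<forall>t. t^3 + a*t^2 + b*t + c = (t - q1) * (t - q2) * (t - e))"
      using mn fac2 q1m q y e1 by auto
    thus ?thesis by blast
  next
    case False
    have fac3: "\<And>t. t^3 + a*t^2 + b*t + c = (t - q1) * (t - e) * (t - q2)" unfolding fac2 by (simp add: mult_ac)
    have "-1 \<le> q1 \<and> q1 \<le> e \<and> e \<le> 1 \<and> 1 \<le> q2 \<and> (\<forall>t. t^3 + a*t^2 + b*t + c = (t - q1) * (t - e) * (t - q2))"
      using fac3 q1m q y e1 False mn by auto
    thus ?thesis by blast
  qed
qed



lemma SU2_D: "M \<in> SU2 \<Longrightarrow> M$2$2 = cnj (M$1$1) \<and> M$2$1 = - cnj (M$1$2) \<and>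
   (Re (M$1$1))^2 + (Im (M$1$1))^2 + (Re (M$1$2))^2 + (Im (M$1$2))^2 = 1"
  unfolding SU2_def by (auto simp: complex_eq_iff power2_eq_square)

lemma rr_coords:
  assumes "M \<in> SU2"
  shows "rr M = E (2*(Im (M$1$1)*Im (M$1$2) - Re (M$1$1)*Re (M$1$2)))
                 (-2*(Re (M$1$1)*Im (M$1$2) + Im (M$1$1)*Re (M$1$2)))
                 ((Re (M$1$1))^2 + (Im (M$1$1))^2 - (Re (M$1$2))^2 - (Im (M$1$2))^2)"
proof -
  have m: "M$2$2 = cnj (M$1$1)" "M$2$1 = - cnj (M$1$2)"
    and n1: "(Re (M$1$1))^2 + (Im (M$1$1))^2 + (Re (M$1$2))^2 + (Im (M$1$2))^2 = 1"
    using SU2_D[OF assms] by auto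
  have det: "M$1$1 * M$2$2 - M$1$2 * M$2$1 = 1" using assms unfolding SU2_def by auto
  show ?thesis
    unfolding rr_def inv2_def Let_def det
    by (simp add: vec_eq_iff forall_2 matrix_matrix_mult_def sum_2 E_nth complex_eq_iff m kk_def power2_eq_square algebra_simps; simp add: field_simps)
qed

lemma om_coords:
  assumes "M \<in> SU2" and D: "D$2$2 = cnj (D$1$1)" "D$2$1 = - cnj (D$1$2)"
    and orth: "Re (M$1$1)*Re (D$1$1) + Im (M$1$1)*Im (D$1$1) + Re (M$1$2)*Re (D$1$2) + Im (M$1$2)*Im (D$1$2) = 0"
  shows "D ** inv2 M = E (2*(Im (M$1$1)*Re (D$1$2) + Re (M$1$1)*Im (D$1$2) - Im (M$1$2)*Re (D$1$1) - Re (M$1$2)*Im (D$1$1)))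
                 (-2*(Re (M$1$1)*Re (D$1$2) - Im (M$1$1)*Im (D$1$2) - Re (M$1$2)*Re (D$1$1) + Im (M$1$2)*Im (D$1$1)))
                 (2*(Re (M$1$1)*Im (D$1$1) - Im (M$1$1)*Re (D$1$1) + Re (M$1$2)*Im (D$1$2) - Im (M$1$2)*Re (D$1$2)))"
proof -
  have m: "M$2$2 = cnj (M$1$1)" "M$2$1 = - cnj (M$1$2)"
    using SU2_D[OF assms(1)] by auto
  have det: "M$1$1 * M$2$2 - M$1$2 * M$2$1 = 1" using assms unfolding SU2_def by auto
  show ?thesis
    unfolding inv2_def Let_def det
    using orth by (simp add: vec_eq_iff forall_2 matrix_matrix_mult_def sum_2 E_nth complex_eq_iff m D algebra_simps; simp add: field_simps)
qed




lemma pointwise: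
  fixes A C p s h l n :: real
  assumes pos: "A > 0" "C > 0" "p > 0" "s > 0"
    and rM: "rr M = E r1 r2 r3" and om: "om = E w1 w2 w3" and r: "r1^2 + r2^2 + r3^2 = 1"
    and h: "kinetic A C p s M om + potential p M = h"
    and l: "ip (mom A C p s M om) kk = l"
    and n: "ip (mom A C p s M om) (rr M) = n"
  shows "2*p*Pcub A C p h l n r3 = (A + p * s * (1-r3^2))*(w1*r2 - w2*r1)^2"
    and "h - p*r3 \<ge> n^2/(2*C)"
    and "ip (rr M) kk = r3"
proof -
  define x where "x = w1*r1 + w2*r2 + w3*r3"
  define sig where "sig = w1*r2 - w2*r1"
  have h': "h = 1/2*A*(w1^2+w2^2+w3^2) + 1/2*(C-A)*x^2 + 1/2*p * s * sig^2 + p*r3"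
    using h[symmetric] unfolding kinetic_def potential_def rM om kk_E brk_E ip_E x_def sig_def
    by (simp add: power2_eq_square algebra_simps)
  have l': "l = A*w3 + (C-A)*x*r3"
    using l[symmetric] unfolding mom_def rM om kk_E brk_E ip_E x_def scale_E add_E
    by (simp add: algebra_simps)
  have n': "n = C*x"
  proof -
    have "n = A*x + (C-A)*x*(r1^2+r2^2+r3^2)"
      using n[symmetric] unfolding mom_def rM om kk_E brk_E ip_E x_def scale_E add_E
      by (simp add: algebra_simps power2_eq_square)
    hence "n = A*x + (C-A)*x" using r by simp
    thus ?thesis by (simp add: algebra_simps)
  qed
  show "2*p*Pcub A C p h l n r3 = (A + p * s * (1-r3^2))*(w1*r2 - w2*r1)^2"
    using alg[OF pos(1,2,3,4) r x_def sig_def h' l' n'] unfolding sig_def .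
  have cs: "(w1^2+w2^2+w3^2)*(r1^2+r2^2+r3^2) - x^2 = (w1*r2-w2*r1)^2 + (w2*r3-w3*r2)^2 + (w3*r1-w1*r3)^2"
    unfolding x_def by algebra
  hence "(w1^2+w2^2+w3^2) - x^2 = (w1*r2-w2*r1)^2 + (w2*r3-w3*r2)^2 + (w3*r1-w1*r3)^2" using r by simp
  moreover have "(w1*r2-w2*r1)^2 + (w2*r3-w3*r2)^2 + (w3*r1-w1*r3)^2 \<ge> 0" by simp
  ultimately have "x^2 \<le> w1^2+w2^2+w3^2" by linarith
  hence "A*x^2 \<le> A*(w1^2+w2^2+w3^2)" using pos by simp
  moreover have "0 \<le> p * s * sig^2" using pos by simp
  moreover have "h - p*r3 - n^2/(2*C) = 1/2*(A*(w1^2+w2^2+w3^2) - A*x^2) + 1/2*(p * s * sig^2)"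
    unfolding h' n' using pos by (simp add: field_simps power2_eq_square)
  ultimately show "h - p*r3 \<ge> n^2/(2*C)" by argo
  show "ip (rr M) kk = r3" unfolding rM kk_E ip_E by simp
qed



lemma comp_vd: "(\<Phi> has_vector_derivative D) (at t) \<Longrightarrow>
   ((\<lambda>\<tau>. \<Phi> \<tau> $ i $ j) has_vector_derivative D $ i $ j) (at t)"
  by (rule bounded_linear.has_vector_derivative[OF bounded_linear_vec_nth],
      rule bounded_linear.has_vector_derivative[OF bounded_linear_vec_nth])

lemma inv2_SU2: "M \<in> SU2 \<Longrightarrow> M ** inv2 M = mat 1"
  unfolding SU2_def inv2_def Let_def
  by (auto simp: vec_eq_iff forall_2 matrix_matrix_mult_def sum_2 mat_def algebra_simps)

lemma at_time:
  assumes I: "open I" "t \<in> I" and su: "\<forall>\<tau>\<in>I. \<Phi> \<tau> \<in> SU2"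
    and dv: "(\<Phi> has_vector_derivative D) (at t)"
  shows "\<exists>w1 w2 w3 r1 r2 r3. D ** inv2 (\<Phi> t) = E w1 w2 w3 \<and> rr (\<Phi> t) = E r1 r2 r3
     \<and> r1^2+r2^2+r3^2 = 1 \<and> ((\<lambda>\<tau>. ip (rr (\<Phi> \<tau>)) kk) has_real_derivative (w1*r2 - w2*r1)) (at t)"
proof -
  define a where "a = Re (\<Phi> t $1$1)"
  define b where "b = Im (\<Phi> t $1$1)"
  define c where "c = Re (\<Phi> t $1$2)"
  define d where "d = Im (\<Phi> t $1$2)"
  define e where "e = Re (D $1$1)"
  define f where "f = Im (D $1$1)"
  define g where "g = Re (D $1$2)"
  define j where "j = Im (D $1$2)"
  have Mt: "\<Phi> t \<in> SU2" using su I by auto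
  have d11: "((\<lambda>\<tau>. \<Phi> \<tau> $ 1 $ 1) has_vector_derivative D $ 1 $ 1) (at t)" by (rule comp_vd[OF dv])
  have d12: "((\<lambda>\<tau>. \<Phi> \<tau> $ 1 $ 2) has_vector_derivative D $ 1 $ 2) (at t)" by (rule comp_vd[OF dv])
  have D22: "D$2$2 = cnj (D$1$1)"
  proof -
    have "((\<lambda>\<tau>. cnj (\<Phi> \<tau> $ 1 $ 1)) has_vector_derivative cnj (D $ 1 $ 1)) (at t)"
      by (rule has_vector_derivative_cnj[OF d11])
    hence "((\<lambda>\<tau>. \<Phi> \<tau> $ 2 $ 2) has_vector_derivative cnj (D $ 1 $ 1)) (at t)"
      by (rule has_vector_derivative_transform_within_open[OF _ I]) (use su SU2_D in auto)
    thus ?thesis using comp_vd[OF dv, of 2 2] vector_derivative_unique_at by blast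
  qed
  have D21: "D$2$1 = - cnj (D$1$2)"
  proof -
    have "((\<lambda>\<tau>. - cnj (\<Phi> \<tau> $ 1 $ 2)) has_vector_derivative - cnj (D $ 1 $ 2)) (at t)"
      by (rule has_vector_derivative_minus, rule has_vector_derivative_cnj[OF d12])
    hence "((\<lambda>\<tau>. \<Phi> \<tau> $ 2 $ 1) has_vector_derivative - cnj (D $ 1 $ 2)) (at t)"
      by (rule has_vector_derivative_transform_within_open[OF _ I]) (use su SU2_D in auto)
    thus ?thesis using comp_vd[OF dv, of 2 1] vector_derivative_unique_at by blast
  qed
  have Nd: "((\<lambda>\<tau>. (Re (\<Phi> \<tau> $1$1))^2 + (Im (\<Phi> \<tau> $1$1))^2 + (Re (\<Phi> \<tau> $1$2))^2 + (Im (\<Phi> \<tau> $1$2))^2)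
     has_real_derivative (2*(a*e + b*f + c*g + d*j))) (at t)"
    unfolding a_def b_def c_def d_def e_def f_def g_def j_def
    by (auto intro!: derivative_eq_intros
       d11 d12 simp: algebra_simps)
  have orth: "a*e + b*f + c*g + d*j = 0"
  proof -
    have "((\<lambda>\<tau>. 1) has_real_derivative (2*(a*e + b*f + c*g + d*j))) (at t)"
      by (rule has_field_derivative_transform_within_open[OF Nd I]) (use su SU2_D in auto)
    hence "2*(a*e + b*f + c*g + d*j) = 0" using DERIV_const DERIV_unique by blast
    thus ?thesis by simp
  qed
  have ud: "((\<lambda>\<tau>. ip (rr (\<Phi> \<tau>)) kk) has_real_derivative (2*(a*e + b*f - c*g - d*j))) (at t)"
  proof -
    have "((\<lambda>\<tau>. (Re (\<Phi> \<tau> $1$1))^2 + (Im (\<Phi> \<tau> $1$1))^2 - (Re (\<Phi> \<tau> $1$2))^2 - (Im (\<Phi> \<tau> $1$2))^2)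
       has_real_derivative (2*(a*e + b*f - c*g - d*j))) (at t)"
      unfolding a_def b_def c_def d_def e_def f_def g_def j_def
      by (auto intro!: derivative_eq_intros
         d11 d12 simp: algebra_simps)
    thus ?thesis
      by (rule has_field_derivative_transform_within_open[OF _ I]) (use su in \<open>auto simp: rr_coords kk_E ip_E\<close>)
  qed
  have om: "D ** inv2 (\<Phi> t) = E (2*(b*g + a*j - d*e - c*f)) (-2*(a*g - b*j - c*e + d*f)) (2*(a*f - b*e + c*j - d*g))"
    unfolding a_def b_def c_def d_def e_def f_def g_def j_def
    by (rule om_coords[OF Mt D22 D21]) (use orth in \<open>simp add: a_def b_def c_def d_def e_def f_def g_def j_def\<close>)
  have rr: "rr (\<Phi> t) = E (2*(b*d - a*c)) (-2*(a*d + b*c)) (a^2 + b^2 - c^2 - d^2)"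
    unfolding a_def b_def c_def d_def by (rule rr_coords[OF Mt])
  have n1: "a^2+b^2+c^2+d^2 = 1" using SU2_D[OF Mt] unfolding a_def b_def c_def d_def by simp
  have "(2*(b*d - a*c))^2 + (-2*(a*d + b*c))^2 + (a^2 + b^2 - c^2 - d^2)^2 = (a^2+b^2+c^2+d^2)^2"
    by algebra
  hence rn: "(2*(b*d - a*c))^2 + (-2*(a*d + b*c))^2 + (a^2 + b^2 - c^2 - d^2)^2 = 1" using n1 by simp
  have sig: "(2*(b*g + a*j - d*e - c*f)) * (-2*(a*d + b*c)) - (-2*(a*g - b*j - c*e + d*f)) * (2*(b*d - a*c))
     = 2*(a*e + b*f - c*g - d*j)"
  proof -
    have "(2*(b*g + a*j - d*e - c*f)) * (-2*(a*d + b*c)) - (-2*(a*g - b*j - c*e + d*f)) * (2*(b*d - a*c))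
       = 4*((a*e+b*f)*(c^2+d^2) - (c*g+d*j)*(a^2+b^2))" by algebra
    also have "\<dots> = 4*((a*e+b*f)*(c^2+d^2) + (a*e+b*f)*(a^2+b^2))"
    proof -
      have cg: "c*g + d*j = -(a*e + b*f)" using orth by simp
      show ?thesis unfolding cg by (simp add: algebra_simps)
    qed
    also have "\<dots> = 4*(a*e+b*f)*(a^2+b^2+c^2+d^2)" by (simp add: algebra_simps)
    also have "\<dots> = 4*(a*e+b*f)" unfolding n1 by simp
    also have "\<dots> = 2*(a*e + b*f - c*g - d*j)" using orth by simp
    finally show ?thesis .
  qed
  show ?thesis using om rr rn ud unfolding sig[symmetric] by blast
qed



lemma Pcub_poly:
  fixes A C p h l n u :: real
  assumes "A > 0" "C > 0" "p > 0"
  shows "Pcub A C p h l n u = u^3 + (-((h - n^2/(2*C))/p + n^2/(2*A*p)))*u^2 + (l*n/(A*p) - 1)*u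
           + ((h - n^2/(2*C))/p - l^2/(2*A*p))"
  using assms unfolding Pcub_def by (simp add: field_simps power2_eq_square power3_eq_cube)

theorem mainTheorem2:
  fixes A C s p h l n :: real and I :: "real set" and \<Phi> \<omega> :: "real \<Rightarrow> cmat"
  assumes "A > 0" "C > 0" "s > 0" "p > 0"
    and "open I" "is_interval I" "I \<noteq> {}"
    and "\<forall>t\<in>I. \<Phi> t \<in> SU2"
    and "\<forall>t\<in>I. (\<Phi> has_vector_derivative (\<omega> t ** \<Phi> t)) (at t)"
    and "\<forall>t\<in>I. ((\<lambda>\<tau>. mom A C p s (\<Phi> \<tau>) (\<omega> \<tau>)) has_vector_derivative
            (brk (\<omega> t) (mom A C p s (\<Phi> t) (\<omega> t)) + DL A C p s (\<Phi> t) (\<omega> t))) (at t)"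
    and "\<forall>t\<in>I. kinetic A C p s (\<Phi> t) (\<omega> t) + potential p (\<Phi> t) = h"
    and "\<forall>t\<in>I. ip (mom A C p s (\<Phi> t) (\<omega> t)) kk = l"
    and "\<forall>t\<in>I. ip (mom A C p s (\<Phi> t) (\<omega> t)) (rr (\<Phi> t)) = n"
  shows "\<exists>e1 e2 e3. -1 \<le> e1 \<and> e1 \<le> e2 \<and> e2 \<le> 1 \<and> 1 \<le> e3
          \<and> (\<forall>u. Pcub A C p h l n u = (u - e1) * (u - e2) * (u - e3))
          \<and> (\<forall>t\<in>I. (\<lambda>\<tau>. ip (rr (\<Phi> \<tau>)) kk) differentiable (at t))
          \<and> (\<forall>t\<in>I. (let u = (\<lambda>\<tau>. ip (rr (\<Phi> \<tau>)) kk); e4 = sqrt (1 + A / (p * s)) in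
                 - (s / 2) * ((u t)^2 - e4^2) * (deriv u t)^2
                   = (u t - e1) * (u t - e2) * (u t - e3)))"
proof -
  note pos = assms(1,2,4,3)
  define u where "u = (\<lambda>\<tau>. ip (rr (\<Phi> \<tau>)) kk)"
  have pt: "\<exists>sg. (u has_real_derivative sg) (at t) \<and> 2*p*Pcub A C p h l n (u t) = (A + p * s * (1-(u t)^2)) * sg^2
      \<and> h - p*(u t) \<ge> n^2/(2*C) \<and> (u t)^2 \<le> 1" if t: "t \<in> I" for t
  proof -
    obtain w1 w2 w3 r1 r2 r3 where om: "(\<omega> t ** \<Phi> t) ** inv2 (\<Phi> t) = E w1 w2 w3"
      and rM: "rr (\<Phi> t) = E r1 r2 r3" and rn: "r1^2+r2^2+r3^2 = 1"
      and ud: "(u has_real_derivative (w1*r2 - w2*r1)) (at t)"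
      using at_time[OF assms(5) t, of \<Phi> "\<omega> t ** \<Phi> t"] assms(8,9) t unfolding u_def by blast
    have omE: "\<omega> t = E w1 w2 w3"
      using om inv2_SU2[of "\<Phi> t"] assms(8) t by (simp add: matrix_mul_assoc[symmetric])
    have ht: "kinetic A C p s (\<Phi> t) (\<omega> t) + potential p (\<Phi> t) = h" using assms(11) t by blast
    have lt: "ip (mom A C p s (\<Phi> t) (\<omega> t)) kk = l" using assms(12) t by blast
    have nt: "ip (mom A C p s (\<Phi> t) (\<omega> t)) (rr (\<Phi> t)) = n" using assms(13) t by blast
    note P = pointwise[OF pos rM omE rn ht lt nt]
    have ut: "u t = r3" using P(3) unfolding u_def by simp
    have "r3^2 \<le> 1" using rn by (smt (verit) zero_le_power2)
    thus ?thesis using P(1,2) assms(11,12,13) t ud unfolding ut by auto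
  qed
  obtain t0 where t0: "t0 \<in> I" using assms(7) by blast
  obtain sg0 where sg0: "2*p*Pcub A C p h l n (u t0) = (A + p * s * (1-(u t0)^2)) * sg0^2"
      "h - p*(u t0) \<ge> n^2/(2*C)" "(u t0)^2 \<le> 1" using pt[OF t0] by blast
  define H where "H = h - n^2/(2*C)"
  define ca where "ca = -(H/p + n^2/(2*A*p))"
  define cb where "cb = l*n/(A*p) - 1"
  define cc where "cc = H/p - l^2/(2*A*p)"
  have poly: "\<And>v. Pcub A C p h l n v = v^3 + ca * v^2 + cb * v + cc"
    unfolding ca_def cb_def cc_def H_def using Pcub_poly pos by simp
  have Pm1: "Pcub A C p h l n (-1) = - ((l+n)^2) / (2*A*p)" unfolding Pcub_def by (simp add: algebra_simps)
  have Pp1: "Pcub A C p h l n 1 = - ((l-n)^2) / (2*A*p)" unfolding Pcub_def by simp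
  have Pm1': "Pcub A C p h l n (-1) \<le> 0" unfolding Pm1 using pos by (simp add: divide_nonpos_pos)
  have Pp1': "Pcub A C p h l n 1 \<le> 0" unfolding Pp1 using pos by (simp add: divide_nonpos_pos)
  have px: "Pcub A C p h l n (u t0) \<ge> 0"
  proof -
    have "A + p * s * (1-(u t0)^2) \<ge> 0" using pos sg0(3) by (smt (verit) mult_nonneg_nonneg)
    hence "2*p*Pcub A C p h l n (u t0) \<ge> 0" unfolding sg0(1) by simp
    thus ?thesis using pos by (simp add: zero_le_mult_iff)
  qed
  have x: "-1 \<le> u t0" "u t0 \<le> 1" using sg0(3) abs_le_square_iff[of "u t0" 1] by auto
  have d1: "3 + 2*ca + cb \<le> 0" if "u t0 = 1"
  proof -
    have "Pcub A C p h l n 1 = 0" using px Pp1' that by simp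
    hence "(l-n)^2 = 0" unfolding Pp1 using pos by simp
    hence ln: "l = n" by simp
    have "H \<ge> p" using sg0(2) that unfolding H_def by simp
    have "3 + 2*ca + cb = 2 - 2*H/p" unfolding ca_def cb_def ln using pos by (simp add: field_simps power2_eq_square)
    also have "\<dots> \<le> 0" using \<open>H \<ge> p\<close> pos by (simp add: field_simps)
    finally show ?thesis .
  qed
  have d2: "3 - 2*ca + cb \<ge> 0" if "u t0 = -1"
  proof -
    have "Pcub A C p h l n (-1) = 0" using px Pm1' that by simp
    hence "(l+n)^2 = 0" unfolding Pm1 using pos by simp
    hence ln: "l = -n" by simp
    have "H \<ge> -p" using sg0(2) that unfolding H_def by simp
    have "3 - 2*ca + cb = 2 + 2*H/p" unfolding ca_def cb_def ln using pos by (simp add: field_simps power2_eq_square)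
    also have "\<dots> \<ge> 0" using \<open>H \<ge> -p\<close> pos by (simp add: field_simps)
    finally show ?thesis by simp
  qed
  obtain e1 e2 e3 where e: "-1 \<le> e1" "e1 \<le> e2" "e2 \<le> 1" "1 \<le> e3"
    and fac: "\<And>v. v^3 + ca * v^2 + cb * v + cc = (v - e1) * (v - e2) * (v - e3)"
    using cubic[of ca cb cc "u t0"] Pm1' Pp1' poly x px d1 d2 by auto
  have facP: "\<forall>v. Pcub A C p h l n v = (v - e1) * (v - e2) * (v - e3)" using poly fac by simp
  have diff: "\<forall>t\<in>I. u differentiable (at t)"
  proof
    fix t assume "t \<in> I"
    then obtain sg where "(u has_real_derivative sg) (at t)" using pt by blast
    thus "u differentiable (at t)" by (metis has_field_derivative_def differentiable_def)
  qed
  have ode: "\<forall>t\<in>I. - (s / 2) * ((u t)^2 - (sqrt (1 + A / (p * s)))^2) * (deriv u t)^2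
                   = (u t - e1) * (u t - e2) * (u t - e3)"
  proof
    fix t assume "t \<in> I"
    then obtain sg where sg: "(u has_real_derivative sg) (at t)"
      "2*p*Pcub A C p h l n (u t) = (A + p * s * (1-(u t)^2)) * sg^2" using pt by blast
    have dv: "deriv u t = sg" using DERIV_imp_deriv[OF sg(1)] .
    have e4: "(sqrt (1 + A / (p * s)))^2 = 1 + A / (p * s)" using pos by simp
    have "- (s / 2) * ((u t)^2 - (1 + A / (p * s))) * sg^2 = Pcub A C p h l n (u t)"
    proof -
      have PE: "Pcub A C p h l n (u t) = (A + p * s * (1-(u t)^2)) * sg^2 / (2*p)"
        using sg(2) pos by (simp add: field_simps)
      show ?thesis unfolding PE using pos by (simp add: field_simps)
    qed
    thus "- (s / 2) * ((u t)^2 - (sqrt (1 + A / (p * s)))^2) * (deriv u t)^2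
                   = (u t - e1) * (u t - e2) * (u t - e3)" unfolding dv e4 using facP by simp
  qed
  show ?thesis using e facP diff ode unfolding u_def Let_def by blast
qed

end
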